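(* Let $\alpha,l,L,k>0$ with $L>l$. For $n\in\{1,2,3,\dots\}$ let $x_n=-\frac{\pi}{2\alpha l}+n\frac{\pi}{\alpha l}$, and let $D=[0,+\infty)\setminus\{x_n: n\ge 1\}$. Define $f:D\to\mathbb{R}$ by $$f(x)=\arctan\!\left(\frac{\tan(\alpha l x)}{k\alpha}\right)+(L-l)x .$$ Then $(0,+\infty)\subseteq f(D)$, i.e. every positive real number is a value of $f$.
   Context: $\arctan$ denotes the principal branch with values in $(-\pi/2,\pi/2)$. *)

theory Defs
  imports Complex_Main
begin

definition xpt :: "real \<Rightarrow> real \<Rightarrow> nat \<Rightarrow> real" where
  "xpt \<alpha> l n = - pi / (2 * \<alpha> * l) + real n * (pi / (\<alpha> * l))"

definition dom_D :: "real \<Rightarrow> real \<Rightarrow> real set" where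
  "dom_D \<alpha> l = {0..} - {xpt \<alpha> l n | n. n \<ge> 1}"

definition fL :: "real \<Rightarrow> real \<Rightarrow> real \<Rightarrow> real \<Rightarrow> real \<Rightarrow> real" where
  "fL \<alpha> l L k x = arctan (tan (\<alpha> * l * x) / (k * \<alpha>)) + (L - l) * x"

end

theory Submission
  imports Defs
begin

lemma ivt_h:
  fixes a c K y t1 t2 :: real and n :: nat
  assumes "K \<noteq> 0" "a \<noteq> 0" "t1 \<le> t2" "-(pi/2) < t1" "t2 < pi/2"
    "arctan (tan t1 / K) + c*(n*pi + t1)/a \<le> y"
    "y \<le> arctan (tan t2 / K) + c*(n*pi + t2)/a"
  shows "\<exists>t. t1 \<le> t \<and> t \<le> t2 \<and> arctan (tan t / K) + c*(n*pi + t)/a = y"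
proof -
  have cs: "\<forall>x\<in>{t1..t2}. cos x \<noteq> 0"
  proof
    fix x assume "x \<in> {t1..t2}"
    then have "-(pi/2) < x" "x < pi/2" using assms by auto
    then show "cos x \<noteq> 0" using cos_gt_zero_pi by force
  qed
  have "continuous_on {t1..t2} (\<lambda>t. arctan (tan t / K) + c*(n*pi + t)/a)"
    using cs assms(1,2) by (intro continuous_intros) auto
  from IVT'[OF assms(6) assms(7) assms(3) this] show ?thesis by blast
qed

lemma tan_big:
  fixes K t :: real
  assumes "K > 0" "arctan K < t" "t < pi/2"
  shows "arctan (tan t / K) > pi/4"
proof -
  have "tan (arctan K) < tan t"
    using assms tan_monotone arctan_lbound[of K] by (meson less_trans)
  then have "tan t / K > 1" using assms by (simp add: tan_arctan)
  then have "arctan (tan t / K) > arctan 1" by (simp add: arctan_less_iff)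
  then show ?thesis by (simp add: arctan_one)
qed

lemma tan_small:
  fixes K t :: real
  assumes "K > 0" "t < - arctan K" "-(pi/2) < t"
  shows "arctan (tan t / K) < - (pi/4)"
proof -
  have "arctan (tan (-t) / K) > pi/4"
    using tan_big[of K "-t"] assms by auto
  then show ?thesis by (simp add: arctan_minus)
qed

lemma half_min2: "0 < (Y::real) \<Longrightarrow> min X Y / 2 < Y"
  by (simp add: min_def)

theorem lemma2:
  fixes \<alpha> l L k :: real
  assumes "\<alpha> > 0" "l > 0" "L > 0" "k > 0" "L > l"
  shows "{0<..} \<subseteq> fL \<alpha> l L k ` dom_D \<alpha> l"
proof
  fix y :: real assume "y \<in> {0<..}"
  then have y: "y > 0" by simp
  define a where "a = \<alpha> * l"
  define c where "c = L - l"
  define K where "K = k * \<alpha>"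
  have a: "a > 0" and c: "c > 0" and K: "K > 0" using assms by (auto simp: a_def c_def K_def)
  define h where "h = (\<lambda>(n::nat) t. arctan (tan t / K) + c*(n*pi + t)/a)"
  define d where "d = min (pi/2 - arctan K) (pi*a/(4*c)) / 2"
  have aK: "arctan K < pi/2" by (rule arctan_ubound)
  have d0: "d > 0" using aK a c by (auto simp: d_def)
  have d1: "d < pi/2 - arctan K" using aK a c by (auto simp: d_def)
  have "pi*a/(4*c) > 0" using a c by simp
  then have d2: "d < pi*a/(4*c)" unfolding d_def
    using half_min2 by blast
  have aK0: "arctan K > 0" using K by (simp add: zero_less_arctan_iff)
  have d3: "d < pi/2" using d1 aK0 by linarith
  have cd: "c * d / a < pi/4" using d2 a c by (simp add: field_simps)
  define m where "m = \<lfloor>y*a/(c*pi) + 1/2\<rfloor>"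
  have m0: "m \<ge> 0" using y a c by (simp add: m_def)
  define n where "n = nat m"
  have nm: "real n = real_of_int m" using m0 by (simp add: n_def)
  have "real_of_int m \<le> y*a/(c*pi) + 1/2" "y*a/(c*pi) + 1/2 < real_of_int m + 1"
    unfolding m_def by linarith+
  then have "(real n - 1/2) \<le> y*a/(c*pi)" "y*a/(c*pi) < real n + 1/2" using nm by linarith+
  then have ylo: "c*(real n - 1/2)*pi/a \<le> y" and yhi: "y < c*(real n + 1/2)*pi/a"
    using a c by (simp_all add: field_simps)
  define t2 where "t2 = pi/2 - d"
  have t2: "arctan K < t2" "t2 < pi/2" using d0 d1 by (auto simp: t2_def)
  have "h n t2 > pi/4 + c*(n*pi + pi/2)/a - pi/4"
  proof -
    have "c*(n*pi + t2)/a = c*(n*pi + pi/2)/a - c*d/a"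
      using a by (simp add: t2_def field_simps)
    then show ?thesis using tan_big[OF K t2] cd unfolding h_def by linarith
  qed
  moreover have "c*(n*pi + pi/2)/a = c*(real n + 1/2)*pi/a" by (simp add: field_simps)
  ultimately have ht2: "y \<le> h n t2" using yhi by linarith
  obtain t1 where t1: "t1 \<le> t2" "-(pi/2) < t1" "h n t1 \<le> y" "n = 0 \<longrightarrow> t1 \<ge> 0"
  proof (cases "n = 0")
    case True
    show ?thesis
      by (rule that[of 0]) (use True y d3 in \<open>auto simp: h_def t2_def\<close>)
  next
    case False
    define t1 where "t1 = -(pi/2) + d"
    have t1: "t1 < - arctan K" "-(pi/2) < t1" using d0 d1 by (auto simp: t1_def)
    have "h n t1 < - (pi/4) + c*(n*pi - pi/2)/a + pi/4"
    proof -
      have "c*(n*pi + t1)/a = c*(n*pi - pi/2)/a + c*d/a"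
        using a by (simp add: t1_def field_simps)
      then show ?thesis using tan_small[OF K t1] cd unfolding h_def by linarith
    qed
    moreover have "c*(n*pi - pi/2)/a = c*(real n - 1/2)*pi/a" by (simp add: field_simps)
    ultimately have "h n t1 \<le> y" using ylo by linarith
    moreover have "t1 \<le> t2" using d3 by (simp add: t1_def t2_def)
    ultimately show ?thesis using that[of t1] t1 False by blast
  qed
  obtain t where t: "t1 \<le> t" "t \<le> t2" "h n t = y"
    using ivt_h[of K a t1 t2 c n y] K a t1 ht2 t2 by (auto simp: h_def)
  have tb: "-(pi/2) < t" "t < pi/2" using t t1 t2 by auto
  define x where "x = (n*pi + t)/a"
  have ax: "\<alpha> * l * x = n*pi + t" using a unfolding x_def a_def[symmetric] by simp
  have tp: "tan (n*pi + t) = tan t" using tan_periodic_nat[of t n] by (simp only: add.commute)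
  have "fL \<alpha> l L k x = h n t"
    unfolding fL_def h_def ax tp by (simp add: x_def c_def K_def)
  then have fx: "fL \<alpha> l L k x = y" using t by simp
  have x0: "x \<ge> 0"
  proof (cases "n = 0")
    case True then show ?thesis using t t1 a by (simp add: x_def)
  next
    case False
    then have "real n \<ge> 1" by simp
    then have "n*pi \<ge> pi" by simp
    then have "n*pi + t > 0" using tb by linarith
    then show ?thesis using a by (simp add: x_def)
  qed
  have "x \<noteq> xpt \<alpha> l j" for j
  proof
    assume "x = xpt \<alpha> l j"
    then have "(n*pi + t)/a = - pi / (2*a) + real j * (pi/a)"
      by (simp add: x_def xpt_def a_def mult.assoc)
    then have E: "a * ((n*pi + t)/a) = a * (- pi / (2*a) + real j * (pi/a))" by simp
    have "n*pi + t = a * ((n*pi + t)/a)" using a by simp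
    also have "\<dots> = a * (- pi / (2*a)) + real j * (a * (pi/a))"
      unfolding E by (simp add: algebra_simps)
    also have "\<dots> = - pi/2 + real j * pi" using a by simp
    finally have "n*pi + t = - pi/2 + real j * pi" .
    then have "t = (real j - real n - 1/2) * pi" by (simp add: algebra_simps)
    then have "(-(1/2)) * pi < (real j - real n - 1/2) * pi" "(real j - real n - 1/2) * pi < (1/2) * pi"
      using tb by auto
    then have "real j - real n - 1/2 > -(1/2)" "real j - real n - 1/2 < 1/2"
      using mult_less_cancel_right_pos[OF pi_gt_zero] by blast+
    then have "n < j" "j < n + 1" by linarith+
    then show False by simp
  qed
  then have "x \<in> dom_D \<alpha> l" using x0 by (auto simp: dom_D_def)
  then show "y \<in> fL \<alpha> l L k ` dom_D \<alpha> l" using fx by (metis image_eqI)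
qed

end
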